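(* For $\lambda\in\mathbb R$ let $q_\lambda(x,y)=6x^5y+20\lambda x^3y^3+6xy^5$. Then: (1) if $\lambda=1$, $\mathcal S(q_\lambda)=\{(1,1)\}$; (2) if $\lambda>0$ and $\lambda\ne1$, $\mathcal S(q_\lambda)=\{(2,2)\}$; (3) if $-\tfrac35<\lambda\le0$, $\mathcal S(q_\lambda)=\{(2,3),(3,2)\}$; (4) if $\lambda\le-\tfrac35$, $\mathcal S(q_\lambda)=\{(3,3)\}$.
   Context: A representation of a real binary sextic $p$ is an expression $p=\sum_{j=1}^r\lambda_j(\alpha_jx+\beta_jy)^{6}$ with $r\ge0$, $\alpha_j,\beta_j\in\mathbb R$, $0\ne\lambda_j\in\mathbb R$; it is honest if the linear forms $\alpha_jx+\beta_jy$ are pairwise non-proportional. Its badge is $(a,b)$ where $a=\#\{j:\lambda_j>0\}$, $b=\#\{j:\lambda_j<0\}$; $\mathcal B(p)$ is the set of badges of honest representations. With $(a,b)\preceq(c,d)$ iff $a\le c,b\le d$, a signature is a minimal element of $\mathcal B(p)$, and $\mathcal S(p)$ is the set of signatures. *)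

theory Defs
  imports Complex_Main
begin

text \<open>A real binary sextic is represented by its polynomial function of (x,y);
  over the reals, polynomial identity and identity of functions coincide.\<close>

definition honest_rep ::
  "(real \<Rightarrow> real \<Rightarrow> real) \<Rightarrow> nat \<Rightarrow> (nat \<Rightarrow> real) \<Rightarrow> (nat \<Rightarrow> real) \<Rightarrow> (nat \<Rightarrow> real) \<Rightarrow> bool"
where
  "honest_rep p r lam al be \<longleftrightarrow>
     (\<forall>j<r. lam j \<noteq> 0) \<and>
     (\<forall>i<r. \<forall>j<r. i \<noteq> j \<longrightarrow> al i * be j - al j * be i \<noteq> 0) \<and>
     (\<forall>x y. p x y = (\<Sum>j<r. lam j * (al j * x + be j * y) ^ 6))"

definition badge :: "nat \<Rightarrow> (nat \<Rightarrow> real) \<Rightarrow> nat \<times> nat" where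
  "badge r lam = (card {j. j < r \<and> lam j > 0}, card {j. j < r \<and> lam j < 0})"

definition badges :: "(real \<Rightarrow> real \<Rightarrow> real) \<Rightarrow> (nat \<times> nat) set" where
  "badges p = {badge r lam | r lam al be. honest_rep p r lam al be}"

definition badge_le :: "nat \<times> nat \<Rightarrow> nat \<times> nat \<Rightarrow> bool" where
  "badge_le u v \<longleftrightarrow> fst u \<le> fst v \<and> snd u \<le> snd v"

definition signatures :: "(real \<Rightarrow> real \<Rightarrow> real) \<Rightarrow> (nat \<times> nat) set" where
  "signatures p = {b \<in> badges p. \<forall>c \<in> badges p. badge_le c b \<longrightarrow> c = b}"

definition q :: "real \<Rightarrow> real \<Rightarrow> real \<Rightarrow> real" where
  "q l x y = 6 * x ^ 5 * y + 20 * l * x ^ 3 * y ^ 3 + 6 * x * y ^ 5"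

end

theory Submission
  imports Defs
begin

definition cc :: "nat \<Rightarrow> nat \<Rightarrow> real" where
 "cc k i = [[0,0,0,1,0,0,0],
            [-1/360, 1/40, -1/8, 0, 1/8, -1/40, 1/360],
            [1/2700, -1/200, 1/20, -49/540, 1/20, -1/200, 1/2700],
            [1/960, -1/120, 13/960, 0, -13/960, 1/120, -1/960],
            [-1/2160, 1/180, -13/720, 7/270, -13/720, 1/180, -1/2160],
            [-1/1440, 1/360, -1/288, 0, 1/288, -1/360, 1/1440],
            [1/720, -1/120, 1/48, -1/36, 1/48, -1/120, 1/720]] ! k ! i"

definition E :: "nat \<Rightarrow> (real \<Rightarrow> real \<Rightarrow> real) \<Rightarrow> real" where
 "E k p = (\<Sum>i<7. cc k i * p 1 (real i - 3))"

lemma sum7: "(\<Sum>i<7. f i) = f 0 + f 1 + f 2 + f 3 + f 4 + f 5 + (f (6::nat)::real)"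
  by (simp add: eval_nat_numeral)

lemma pw6: "(a + b * t)^6 = a^6 + 6*t*(a^5*b) + 15*t^2*(a^4*b^2) + 20*t^3*(a^3*b^3) + 15*t^4*(a^2*b^4) + 6*t^5*(a*b^5) + t^6*(b^6::real)"
  by algebra


lemma lin7: "k \<le> 6 \<Longrightarrow> (\<Sum>i<7. cc k i * (m0 + 6*(real i - 3)*m1 + 15*(real i - 3)^2*m2 + 20*(real i - 3)^3*m3 + 15*(real i - 3)^4*m4 + 6*(real i - 3)^5*m5 + (real i - 3)^6*m6)) = [m0,m1,m2,m3,m4,m5,m6] ! k"
proof -
  assume "k \<le> 6"
  hence "k = 0 \<or> k = 1 \<or> k = 2 \<or> k = 3 \<or> k = 4 \<or> k = 5 \<or> k = 6" by arith
  thus ?thesis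
    by (elim disjE; simp only: sum7; simp add: cc_def field_simps)
qed

lemma E_pow: "k \<le> 6 \<Longrightarrow> (\<Sum>i<7. cc k i * (a + b * (real i - 3))^6) = a^(6-k) * b^k"
proof -
  assume k: "k \<le> 6"
  have "(\<Sum>i<7. cc k i * (a + b * (real i - 3))^6) = [a^6, a^5*b, a^4*b^2, a^3*b^3, a^2*b^4, a*b^5, b^6] ! k"
    unfolding pw6 using lin7[OF k] by simp
  also have "\<dots> = a^(6-k) * b^k"
  proof -
    from k have "k = 0 \<or> k = 1 \<or> k = 2 \<or> k = 3 \<or> k = 4 \<or> k = 5 \<or> k = 6" by arith
    thus ?thesis by (elim disjE; simp)
  qed
  finally show ?thesis .
qed

lemma E_rep:
  assumes "\<forall>x y. p x y = (\<Sum>j<r. lam j * (al j * x + be j * y) ^ 6)" and "k \<le> 6"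
  shows "E k p = (\<Sum>j<r. lam j * (al j^(6-k) * be j^k))"
proof -
  have "E k p = (\<Sum>i<7. cc k i * (\<Sum>j<r. lam j * (al j + be j * (real i - 3)) ^ 6))"
    unfolding E_def using assms(1) by simp
  also have "\<dots> = (\<Sum>j<r. lam j * (\<Sum>i<7. cc k i * (al j + be j * (real i - 3)) ^ 6))"
    by (simp add: sum_distrib_left sum_distrib_right sum.swap[of _ "{..<7}"] mult.left_commute)
  also have "\<dots> = (\<Sum>j<r. lam j * (al j^(6-k) * be j^k))"
    using E_pow[OF assms(2)] by simp
  finally show ?thesis .
qed

lemma E_q: "E 0 (q l) = 0" "E 1 (q l) = 1" "E 2 (q l) = 0" "E 3 (q l) = l"
  "E 4 (q l) = 0" "E 5 (q l) = 1" "E 6 (q l) = 0"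
  by (simp_all only: E_def sum7; simp add: cc_def q_def field_simps)+

lemma moment:
  assumes "\<forall>x y. q l x y = (\<Sum>j<r. lam j * (al j * x + be j * y) ^ 6)"
  shows "f1 + l * f3 + f5 = (\<Sum>j<r. lam j * (f0 * al j^6 + f1 * (al j^5 * be j) + f2 * (al j^4*be j^2)
     + f3 * (al j^3*be j^3) + f4 * (al j^2 * be j^4) + f5 * (al j * be j^5) + f6 * be j^6))"
proof -
  have "f1 + l * f3 + f5 = f0 * E 0 (q l) + f1 * E 1 (q l) + f2 * E 2 (q l) + f3 * E 3 (q l)
     + f4 * E 4 (q l) + f5 * E 5 (q l) + f6 * E 6 (q l)" unfolding E_q by simp
  also have "\<dots> = (\<Sum>j<r. lam j * (f0 * al j^6 + f1 * (al j^5 * be j) + f2 * (al j^4*be j^2)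
     + f3 * (al j^3*be j^3) + f4 * (al j^2 * be j^4) + f5 * (al j * be j^5) + f6 * be j^6))"
    using E_rep[OF assms, of 0] E_rep[OF assms, of 1] E_rep[OF assms, of 2] E_rep[OF assms, of 3]
      E_rep[OF assms, of 4] E_rep[OF assms, of 5] E_rep[OF assms, of 6]
    by (simp add: sum_distrib_left sum.distrib[symmetric] algebra_simps)
  finally show ?thesis .
qed

lemma Sq:
  assumes "\<forall>x y. q l x y = (\<Sum>j<r. lam j * (al j * x + be j * y) ^ 6)"
  shows "2*x0*x1 + l*(2*x0*x3+2*x1*x2) + 2*x2*x3 =
     (\<Sum>j<r. lam j * (x0*al j^3 + x1*al j^2*be j + x2*al j*be j^2 + x3*be j^3)^2)"
proof -
  have "2*x0*x1 + l*(2*x0*x3+2*x1*x2) + 2*x2*x3 = (\<Sum>j<r. lam j * (x0^2 * al j^6 + (2*x0*x1) * (al j^5 * be j) + (2*x0*x2+x1^2) * (al j^4*be j^2)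
     + (2*x0*x3+2*x1*x2) * (al j^3*be j^3) + (2*x1*x3+x2^2) * (al j^2 * be j^4) + (2*x2*x3) * (al j * be j^5) + x3^2 * be j^6))"
    using moment[OF assms] by simp
  also have "\<dots> = (\<Sum>j<r. lam j * (x0*al j^3 + x1*al j^2*be j + x2*al j*be j^2 + x3*be j^3)^2)"
    by (rule sum.cong) (simp, algebra)
  finally show ?thesis .
qed

lemma Apo:
  assumes "\<forall>x y. q l x y = (\<Sum>j<r. lam j * (al j * x + be j * y) ^ 6)"
  shows "m0*(g1+l*g3) + m1*(g0+l*g2+g4) + m2*(l*g1+g3) =
     (\<Sum>j<r. lam j * ((g0*al j^4 + g1*al j^3*be j + g2*al j^2*be j^2 + g3*al j*be j^3 + g4*be j^4)
        * (m0*al j^2 + m1*al j*be j + m2*be j^2)))"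
proof -
  have "m0*(g1+l*g3) + m1*(g0+l*g2+g4) + m2*(l*g1+g3) = (g1*m0+g0*m1) + l * (g3*m0+g2*m1+g1*m2) + (g4*m1+g3*m2)"
    by algebra
  also have "\<dots> = (\<Sum>j<r. lam j * ((g0*m0) * al j^6 + (g1*m0+g0*m1) * (al j^5 * be j) + (g2*m0+g1*m1+g0*m2) * (al j^4*be j^2)
     + (g3*m0+g2*m1+g1*m2) * (al j^3*be j^3) + (g4*m0+g3*m1+g2*m2) * (al j^2 * be j^4) + (g4*m1+g3*m2) * (al j * be j^5) + (g4*m2) * be j^6))"
    by (rule moment[OF assms])
  also have "\<dots> = (\<Sum>j<r. lam j * ((g0*al j^4 + g1*al j^3*be j + g2*al j^2*be j^2 + g3*al j*be j^3 + g4*be j^4)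
        * (m0*al j^2 + m1*al j*be j + m2*be j^2)))"
    by (rule sum.cong) (simp, algebra)
  finally show ?thesis .
qed

lemma core:
  assumes "\<forall>x y. q l x y = (\<Sum>j<r. lam j * (al j * x + be j * y) ^ 6)"
    and "2*x0*x1 + l*(2*x0*x3+2*x1*x2) + 2*x2*x3 > 0"
    and "\<forall>j<r. lam j > 0 \<longrightarrow> x0*al j^3 + x1*al j^2*be j + x2*al j*be j^2 + x3*be j^3 = 0"
  shows False
proof -
  have "(\<Sum>j<r. lam j * (x0*al j^3 + x1*al j^2*be j + x2*al j*be j^2 + x3*be j^3)^2) \<le> 0"
  proof (rule sum_nonpos)
    fix j assume "j \<in> {..<r}"
    thus "lam j * (x0*al j^3 + x1*al j^2*be j + x2*al j*be j^2 + x3*be j^3)^2 \<le> 0"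
      using assms(3) by (cases "lam j > 0") (auto intro: mult_nonpos_nonneg)
  qed
  thus False using Sq[OF assms(1), of x0 x1 x3 x2] assms(2) by linarith
qed

lemma in_badges: "honest_rep p r lam al be \<Longrightarrow> badge r lam \<in> badges p"
  unfolding badges_def by blast

lemma badges_swap:
  assumes "(a,b) \<in> badges (q l)" shows "(b,a) \<in> badges (q l)"
proof -
  obtain r lam al be where ab: "(a,b) = badge r lam" and h: "honest_rep (q l) r lam al be"
    using assms unfolding badges_def by blast
  define lam' where "lam' = (\<lambda>j. - lam j)"
  define be' where "be' = (\<lambda>j. - be j)"
  have "honest_rep (q l) r lam' al be'"
    unfolding honest_rep_def
  proof (intro conjI allI impI)
    fix j assume "j < r" thus "lam' j \<noteq> 0" using h unfolding honest_rep_def lam'_def by auto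
  next
    fix i j assume "i < r" "j < r" "i \<noteq> j"
    thus "al i * be' j - al j * be' i \<noteq> 0" using h unfolding honest_rep_def be'_def by auto
  next
    fix x y
    have "q l x y = - q l x (-y)" unfolding q_def by algebra
    also have "\<dots> = - (\<Sum>j<r. lam j * (al j * x + be j * (-y)) ^ 6)"
      using h unfolding honest_rep_def by simp
    also have "\<dots> = (\<Sum>j<r. lam' j * (al j * x + be' j * y) ^ 6)"
      unfolding lam'_def be'_def by (simp add: sum_negf[symmetric])
    finally show "q l x y = (\<Sum>j<r. lam' j * (al j * x + be' j * y) ^ 6)" .
  qed
  moreover have "badge r lam' = (b,a)"
    using ab unfolding badge_def lam'_def by auto
  ultimately show ?thesis using in_badges by metis
qed

lemma badge_sum:
  assumes "honest_rep p r lam al be"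
  shows "fst (badge r lam) + snd (badge r lam) = r"
proof -
  have "{j. j < r \<and> lam j > 0} \<union> {j. j < r \<and> lam j < 0} = {..<r}"
    using assms unfolding honest_rep_def by (auto simp: linorder_neq_iff)
  moreover have "card ({j. j < r \<and> lam j > 0} \<union> {j. j < r \<and> lam j < 0}) =
     card {j. j < r \<and> lam j > 0} + card {j. j < r \<and> lam j < 0}"
    by (rule card_Un_disjoint) auto
  ultimately show ?thesis unfolding badge_def by simp
qed

lemma quad_pos:
  fixes P R S :: real
  assumes "P > 0 \<or> S > 0 \<or> R^2 > 4*P*S"
  shows "\<exists>c d. P*c^2 + R*c*d + S*d^2 > 0"
proof -
  consider "P > 0" | "S > 0" | "P \<le> 0" "S \<le> 0" "R^2 > 4*P*S" using assms by linarith
  thus ?thesis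
  proof cases
    case 1 thus ?thesis by (intro exI[of _ 1] exI[of _ 0]) simp
  next
    case 2 thus ?thesis by (intro exI[of _ 0] exI[of _ 1]) simp
  next
    case 3
    show ?thesis
    proof (cases "P = 0")
      case True
      with 3 have "R \<noteq> 0" by auto
      have "P*((1-S)/R)^2 + R*((1-S)/R)*1 + S*1^2 = 1" using True \<open>R \<noteq> 0\<close> by (simp add: field_simps)
      thus ?thesis by (intro exI[of _ "(1-S)/R"] exI[of _ 1]) simp
    next
      case False
      with 3 have "P < 0" by simp
      have "P*R^2 + R*R*(-2*P) + S*(-2*P)^2 = (-P) * (R^2 - 4*P*S)" by algebra
      moreover have "(-P) * (R^2 - 4*P*S) > 0" using \<open>P < 0\<close> 3 by (intro mult_pos_pos) auto
      ultimately show ?thesis by (intro exI[of _ R] exI[of _ "-2*P"]) simp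
    qed
  qed
qed

lemma fpos:
  fixes A B D l :: real
  assumes l: "l \<le> -3/5" and disc: "B^2 > 4*A*D"
  shows "(A^2+D^2+l*(2*A*D+B^2))^2 - 4*(B*(A+l*D))*(B*(D+l*A)) > 0"
proof -
  define u where "u = A^2+D^2"
  define v where "v = A*D"
  define w where "w = B^2"
  have id: "(A^2+D^2+l*(2*A*D+B^2))^2 - 4*(B*(A+l*D))*(B*(D+l*A)) = l^2*w^2 - (2*l*u+4*v)*w + (u+2*l*v)^2"
    unfolding u_def v_def w_def by algebra
  have w0: "w \<ge> 0" unfolding w_def by simp
  have u0: "u \<ge> 0" unfolding u_def by simp
  show ?thesis
  proof (cases "v \<le> 0")
    case True
    have "l*u \<le> 0" using l u0 by (simp add: mult_nonpos_nonneg)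
    hence "- (2*l*u+4*v) \<ge> 0" using True by linarith
    hence t2: "- (2*l*u+4*v)*w \<ge> 0" using w0 by simp
    show ?thesis
    proof (cases "w > 0")
      case True
      have "l^2*w^2 > 0" using True l by simp
      moreover have "(u+2*l*v)^2 \<ge> 0" by simp
      ultimately show ?thesis unfolding id using t2 by linarith
    next
      case False
      hence "w = 0" using w0 by simp
      hence "v < 0" using disc unfolding w_def v_def by simp
      have "u + 2*v = (A+D)^2" unfolding u_def v_def by algebra
      hence "u + 2*v \<ge> 0" by simp
      have "2*l*v \<ge> 0" using \<open>v < 0\<close> l by (simp add: mult_nonpos_nonpos)
      hence "u + 2*l*v > 0" using \<open>u + 2*v \<ge> 0\<close> \<open>v < 0\<close> by linarith
      hence "(u+2*l*v)^2 > 0" by simp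
      thus ?thesis unfolding id using \<open>w = 0\<close> by simp
    qed
  next
    case False
    hence v: "v > 0" by simp
    define m where "m = -l"
    define d where "d = w - 4*v"
    define e where "e = u - 2*v"
    have m: "m \<ge> 3/5" using l unfolding m_def by simp
    have d: "d > 0" using disc unfolding d_def w_def v_def by simp
    have "e = (A-D)^2" unfolding e_def u_def v_def by algebra
    hence e: "e \<ge> 0" by simp
    have id2: "l^2*w^2 - (2*l*u+4*v)*w + (u+2*l*v)^2 =
      4*v^2*((5*m-3)*(m+1)) + 4*v*d*((2*m-1)*(m+1)) + 4*v*e*(m+1) + (m*d+e)^2"
      unfolding m_def d_def e_def by algebra
    have "4*v^2*((5*m-3)*(m+1)) \<ge> 0" using m by (intro mult_nonneg_nonneg) auto
    moreover have "4*v*d*((2*m-1)*(m+1)) > 0" using m v d by (intro mult_pos_pos) auto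
    moreover have "4*v*e*(m+1) \<ge> 0" using m v e by (intro mult_nonneg_nonneg) auto
    moreover have "(m*d+e)^2 \<ge> 0" by simp
    ultimately show ?thesis unfolding id id2 by linarith
  qed
qed

lemma P2:
  assumes rep: "\<forall>x y. q l x y = (\<Sum>j<r. lam j * (al j * x + be j * y) ^ 6)"
    and l: "l \<le> -3/5" and np: "a1*b2 - a2*b1 \<noteq> 0"
    and cov: "\<forall>j<r. lam j > 0 \<longrightarrow> (b1*al j - a1*be j)*(b2*al j - a2*be j) = 0"
  shows False
proof -
  define A where "A = b1*b2"
  define B where "B = -(b1*a2+a1*b2)"
  define D where "D = a1*a2"
  have disc: "B^2 > 4*A*D"
  proof -
    have "B^2 - 4*A*D = (a1*b2 - a2*b1)^2" unfolding A_def B_def D_def by algebra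
    moreover have "(a1*b2 - a2*b1)^2 > 0" using np by simp
    ultimately show ?thesis by linarith
  qed
  define P where "P = B*(A+l*D)"
  define S where "S = B*(D+l*A)"
  define R where "R = A^2+D^2+l*(2*A*D+B^2)"
  have "R^2 > 4*P*S" using fpos[OF l disc] unfolding P_def S_def R_def by simp
  then obtain c d where cd: "P*c^2 + R*c*d + S*d^2 > 0" using quad_pos by blast
  show False
  proof (rule core[OF rep, of "A*c" "A*d+B*c" "D*d" "B*d+D*c"])
    have "2*(A*c)*(A*d+B*c) + l*(2*(A*c)*(D*d)+2*(A*d+B*c)*(B*d+D*c)) + 2*(B*d+D*c)*(D*d)
        = 2*(P*c^2 + R*c*d + S*d^2)" unfolding P_def R_def S_def by algebra
    thus "2*(A*c)*(A*d+B*c) + l*(2*(A*c)*(D*d)+2*(A*d+B*c)*(B*d+D*c)) + 2*(B*d+D*c)*(D*d) > 0"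
      using cd by simp
  next
    show "\<forall>j<r. lam j > 0 \<longrightarrow> A*c*al j^3 + (A*d+B*c)*al j^2*be j + (B*d+D*c)*al j*be j^2 + D*d*be j^3 = 0"
    proof (intro allI impI)
      fix j assume "j < r" "lam j > 0"
      hence z: "(b1*al j - a1*be j)*(b2*al j - a2*be j) = 0" using cov by blast
      have "A*c*al j^3 + (A*d+B*c)*al j^2*be j + (B*d+D*c)*al j*be j^2 + D*d*be j^3
         = ((b1*al j - a1*be j)*(b2*al j - a2*be j)) * (c*al j + d*be j)"
        unfolding A_def B_def D_def by algebra
      thus "A*c*al j^3 + (A*d+B*c)*al j^2*be j + (B*d+D*c)*al j*be j^2 + D*d*be j^3 = 0"
        using z by simp
    qed
  qed
qed

lemma pos1:
  assumes rep: "\<forall>x y. q l x y = (\<Sum>j<r. lam j * (al j * x + be j * y) ^ 6)"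
    and l: "l > -1"
  shows "\<exists>j<r. lam j > 0"
proof (rule ccontr)
  assume nt: "\<not> (\<exists>j<r. lam j > 0)"
  show False
  proof (rule core[OF rep, of 1 1 1 1])
    show "2*1*1 + l*(2*1*1+2*1*1) + 2*1*1 > (0::real)" using l by simp
    show "\<forall>j<r. lam j > 0 \<longrightarrow> 1*al j^3 + 1*al j^2*be j + 1*al j*be j^2 + 1*be j^3 = 0"
      using nt by auto
  qed
qed

lemma pos2:
  assumes rep: "\<forall>x y. q l x y = (\<Sum>j<r. lam j * (al j * x + be j * y) ^ 6)"
    and l: "(-1 < l \<and> l < 1) \<or> l > 1"
    and one: "\<forall>j<r. lam j > 0 \<longrightarrow> al j = a \<and> be j = b"
  shows False
proof -
  define c1 where "c1 = a^3+a^2*b+a*b^2+b^3"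
  define c2 where "c2 = (if l < 1 then a^3+a^2*b-a*b^2-b^3 else a^3-a^2*b-a*b^2+b^3)"
  define w where "w = (if l < 1 then [1,1,-1,-1] else [1,-1,-1,(1::real)])"
  have Q: "\<And>x0 x1 x2 x3. (2*x0*x1 + l*(2*x0*x3+2*x1*x2) + 2*x2*x3 :: real) = x0*x1*2 + l*(x0*x3*2+x1*x2*2) + x2*x3*2" by simp
  show False
  proof (cases "c1 = 0 \<and> c2 = 0")
    case True
    show False
    proof (rule core[OF rep, of 1 1 1 1])
      show "2*1*1 + l*(2*1*1+2*1*1) + 2*1*1 > (0::real)" using l by auto
      show "\<forall>j<r. lam j > 0 \<longrightarrow> 1*al j^3 + 1*al j^2*be j + 1*al j*be j^2 + 1*be j^3 = 0"
        using one True unfolding c1_def by auto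
    qed
  next
    case False
    hence nz: "c1^2 + c2^2 > 0" by (simp add: sum_power2_gt_zero_iff)
    show False
    proof (cases "l < 1")
      case True
      show False
      proof (rule core[OF rep, of "c2-c1" "c2-c1" "c2+c1" "c2+c1"])
        have "2*(c2-c1)*(c2-c1) + l*(2*(c2-c1)*(c2+c1)+2*(c2-c1)*(c2+c1)) + 2*(c2+c1)*(c2+c1)
           = 4*(1+l)*c2^2 + 4*(1-l)*c1^2" by algebra
        moreover have "4*(1+l)*c2^2 + 4*(1-l)*c1^2 > 0"
        proof -
          have "4*(1+l)*c2^2 + 4*(1-l)*c1^2 \<ge> 4*min (1+l) (1-l) * (c1^2+c2^2)"
          proof -
            have "(1+l)*c2^2 \<ge> min (1+l) (1-l) * c2^2" by (intro mult_right_mono) auto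
            moreover have "(1-l)*c1^2 \<ge> min (1+l) (1-l) * c1^2" by (intro mult_right_mono) auto
            ultimately show ?thesis by (simp add: algebra_simps)
          qed
          moreover have "4*min (1+l) (1-l) * (c1^2+c2^2) > 0" using l True nz by auto
          ultimately show ?thesis by linarith
        qed
        ultimately show "2*(c2-c1)*(c2-c1) + l*(2*(c2-c1)*(c2+c1)+2*(c2-c1)*(c2+c1)) + 2*(c2+c1)*(c2+c1) > 0" by simp
        show "\<forall>j<r. lam j > 0 \<longrightarrow> (c2-c1)*al j^3 + (c2-c1)*al j^2*be j + (c2+c1)*al j*be j^2 + (c2+c1)*be j^3 = 0"
        proof (intro allI impI)
          fix j assume "j < r" "lam j > 0"
          hence "al j = a" "be j = b" using one by auto
          moreover have "(c2-c1)*a^3 + (c2-c1)*a^2*b + (c2+c1)*a*b^2 + (c2+c1)*b^3 = 0"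
          proof -
            have e: "c2 = a^3+a^2*b-a*b^2-b^3" unfolding c2_def using True by simp
            have "((a^3+a^2*b-a*b^2-b^3)-(a^3+a^2*b+a*b^2+b^3))*a^3 + ((a^3+a^2*b-a*b^2-b^3)-(a^3+a^2*b+a*b^2+b^3))*a^2*b
              + ((a^3+a^2*b-a*b^2-b^3)+(a^3+a^2*b+a*b^2+b^3))*a*b^2 + ((a^3+a^2*b-a*b^2-b^3)+(a^3+a^2*b+a*b^2+b^3))*b^3 = 0"
              by algebra
            thus ?thesis unfolding c1_def e .
          qed
          ultimately show "(c2-c1)*al j^3 + (c2-c1)*al j^2*be j + (c2+c1)*al j*be j^2 + (c2+c1)*be j^3 = 0"
            by simp
        qed
      qed
    next
      case False
      hence l1: "l > 1" using l by simp
      show False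
      proof (rule core[OF rep, of "c2-c1" "c2+c1" "c2-c1" "c2+c1"])
        have "2*(c2-c1)*(c2+c1) + l*(2*(c2-c1)*(c2-c1)+2*(c2+c1)*(c2+c1)) + 2*(c2+c1)*(c2-c1)
           = 4*(l+1)*c2^2 + 4*(l-1)*c1^2" by algebra
        moreover have "4*(l+1)*c2^2 + 4*(l-1)*c1^2 > 0"
        proof -
          have "(l+1)*c2^2 \<ge> (l-1)*c2^2" by (intro mult_right_mono) auto
          hence "4*(l+1)*c2^2 + 4*(l-1)*c1^2 \<ge> 4*(l-1)*(c1^2+c2^2)" by (simp add: algebra_simps)
          moreover have "4*(l-1)*(c1^2+c2^2) > 0" using l1 nz by simp
          ultimately show ?thesis by linarith
        qed
        ultimately show "2*(c2-c1)*(c2+c1) + l*(2*(c2-c1)*(c2-c1)+2*(c2+c1)*(c2+c1)) + 2*(c2+c1)*(c2-c1) > 0" by simp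
        show "\<forall>j<r. lam j > 0 \<longrightarrow> (c2-c1)*al j^3 + (c2+c1)*al j^2*be j + (c2+c1)*al j*be j^2 + (c2-c1)*be j^3 = 0"
        proof (intro allI impI)
          fix j assume "j < r" "lam j > 0"
          hence "al j = a" "be j = b" using one by auto
          moreover have "(c2-c1)*a^3 + (c2+c1)*a^2*b + (c2+c1)*a*b^2 + (c2-c1)*b^3 = 0"
          proof -
            have e: "c2 = a^3-a^2*b-a*b^2+b^3" unfolding c2_def using False by simp
            have "((a^3-a^2*b-a*b^2+b^3)-(a^3+a^2*b+a*b^2+b^3))*a^3 + ((a^3-a^2*b-a*b^2+b^3)+(a^3+a^2*b+a*b^2+b^3))*a^2*b
              + ((a^3-a^2*b-a*b^2+b^3)+(a^3+a^2*b+a*b^2+b^3))*a*b^2 + ((a^3-a^2*b-a*b^2+b^3)-(a^3+a^2*b+a*b^2+b^3))*b^3 = 0"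
              by algebra
            thus ?thesis unfolding c1_def e .
          qed
          ultimately show "(c2-c1)*al j^3 + (c2+c1)*al j^2*be j + (c2+c1)*al j*be j^2 + (c2-c1)*be j^3 = 0"
            by simp
        qed
      qed
    qed
  qed
qed

lemma TP:
  fixes g0 g2 g4 l a b c d :: real
  assumes l: "l \<le> 0" and con: "g0 + l*g2 + g4 = 0"
    and z1: "g0*a^4 + g2*a^2*b^2 + g4*b^4 = 0" and z2: "g0*c^4 + g2*c^2*d^2 + g4*d^4 = 0"
    and n1: "a \<noteq> 0 \<or> b \<noteq> 0" and n2: "c \<noteq> 0 \<or> d \<noteq> 0"
    and nR: "a^2*d^2 \<noteq> c^2*b^2"
    and nE: "\<not> (b = 0 \<and> c = 0)" "\<not> (a = 0 \<and> d = 0)"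
  shows "g0 = 0 \<and> g2 = 0 \<and> g4 = 0"
proof -
  define S where "S = a^2"
  define T where "T = b^2"
  define S' where "S' = c^2"
  define T' where "T' = d^2"
  have e1: "g0*S^2 + g2*S*T + g4*T^2 = 0" using z1 unfolding S_def T_def by algebra
  have e2: "g0*S'^2 + g2*S'*T' + g4*T'^2 = 0" using z2 unfolding S'_def T'_def by algebra
  define K where "K = T*T' + S*S' - l*(S*T'+S'*T)"
  define \<Delta> where "\<Delta> = S*T' - S'*T"
  have \<Delta>: "\<Delta> \<noteq> 0" using nR unfolding \<Delta>_def S_def T_def S'_def T'_def by auto
  have S0: "S \<ge> 0" "T \<ge> 0" "S' \<ge> 0" "T' \<ge> 0" unfolding S_def T_def S'_def T'_def by auto
  have K: "K > 0"
  proof -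
    have "-l*(S*T'+S'*T) \<ge> 0" using l S0 by (intro mult_nonneg_nonneg) auto
    moreover have "T*T' \<ge> 0" "S*S' \<ge> 0" using S0 by auto
    moreover have "T*T' > 0 \<or> S*S' > 0"
    proof (cases "b = 0")
      case True
      hence "a \<noteq> 0" "c \<noteq> 0" using n1 nE by auto
      thus ?thesis unfolding S_def S'_def by simp
    next
      case False
      show ?thesis
      proof (cases "d = 0")
        case True
        hence "c \<noteq> 0" "a \<noteq> 0" using n2 nE by auto
        thus ?thesis unfolding S_def S'_def by simp
      next
        case False
        thus ?thesis using \<open>b \<noteq> 0\<close> unfolding T_def T'_def by simp
      qed
    qed
    ultimately show ?thesis unfolding K_def by linarith
  qed
  have "\<Delta>*K \<noteq> 0" using \<Delta> K by simp
  moreover have "(\<Delta>*K)*g0 = 0" using e1 e2 con unfolding \<Delta>_def K_def by algebra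
  moreover have "(\<Delta>*K)*g2 = 0" using e1 e2 con unfolding \<Delta>_def K_def by algebra
  moreover have "(\<Delta>*K)*g4 = 0" using e1 e2 con unfolding \<Delta>_def K_def by algebra
  ultimately show ?thesis by simp
qed

lemma Rsign:
  fixes a b c d :: real
  assumes "a^2*d^2 = c^2*b^2" "a*d - c*b \<noteq> 0"
  shows "a*d = - (c*b)"
proof -
  have "(a*d - c*b)*(a*d + c*b) = 0" using assms(1) by algebra
  thus ?thesis using assms(2) by simp
qed

lemma three:
  fixes a1 b1 a2 b2 a3 b3 :: real
  assumes np12: "a1*b2 - a2*b1 \<noteq> 0" and np13: "a1*b3 - a3*b1 \<noteq> 0" and np23: "a2*b3 - a3*b2 \<noteq> 0"
  shows "(a1^2*b2^2 \<noteq> a2^2*b1^2 \<and> \<not>(b1 = 0 \<and> a2 = 0) \<and> \<not>(a1 = 0 \<and> b2 = 0)) \<or>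
         (a1^2*b3^2 \<noteq> a3^2*b1^2 \<and> \<not>(b1 = 0 \<and> a3 = 0) \<and> \<not>(a1 = 0 \<and> b3 = 0)) \<or>
         (a2^2*b3^2 \<noteq> a3^2*b2^2 \<and> \<not>(b2 = 0 \<and> a3 = 0) \<and> \<not>(a2 = 0 \<and> b3 = 0))"
proof (rule ccontr)
  assume H: "\<not> ?thesis"
  have E12: "\<not>(b1 = 0 \<and> a2 = 0) \<and> \<not>(a1 = 0 \<and> b2 = 0)"
  proof
    show "\<not>(b1 = 0 \<and> a2 = 0)"
    proof
      assume h: "b1 = 0 \<and> a2 = 0"
      hence "a1 \<noteq> 0" "b2 \<noteq> 0" using np12 by auto
      show False using H h \<open>a1 \<noteq> 0\<close> np13 np23 by auto
    qed
    show "\<not>(a1 = 0 \<and> b2 = 0)"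
    proof
      assume h: "a1 = 0 \<and> b2 = 0"
      hence "b1 \<noteq> 0" "a2 \<noteq> 0" using np12 by auto
      show False using H h \<open>b1 \<noteq> 0\<close> np13 np23 by auto
    qed
  qed
  have R12: "a1^2*b2^2 = a2^2*b1^2" using H E12 by blast
  have E13: "\<not>(b1 = 0 \<and> a3 = 0) \<and> \<not>(a1 = 0 \<and> b3 = 0)"
  proof
    show "\<not>(b1 = 0 \<and> a3 = 0)"
    proof
      assume h: "b1 = 0 \<and> a3 = 0"
      hence "a1 \<noteq> 0" "b3 \<noteq> 0" using np13 by auto
      from R12 h have "a1^2*b2^2 = 0" by simp
      hence "b2 = 0" using \<open>a1 \<noteq> 0\<close> by simp
      thus False using np12 h by simp
    qed
    show "\<not>(a1 = 0 \<and> b3 = 0)"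
    proof
      assume h: "a1 = 0 \<and> b3 = 0"
      hence "b1 \<noteq> 0" "a3 \<noteq> 0" using np13 by auto
      from R12 h have "a2^2*b1^2 = 0" by simp
      hence "a2 = 0" using \<open>b1 \<noteq> 0\<close> by simp
      thus False using np12 h by simp
    qed
  qed
  have R13: "a1^2*b3^2 = a3^2*b1^2" using H E13 by blast
  have E23: "\<not>(b2 = 0 \<and> a3 = 0) \<and> \<not>(a2 = 0 \<and> b3 = 0)"
  proof
    show "\<not>(b2 = 0 \<and> a3 = 0)"
    proof
      assume h: "b2 = 0 \<and> a3 = 0"
      hence "a2 \<noteq> 0" "b3 \<noteq> 0" using np23 by auto
      from R12 h have "a2^2*b1^2 = 0" by simp
      hence "b1 = 0" using \<open>a2 \<noteq> 0\<close> by simp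
      thus False using np12 h by simp
    qed
    show "\<not>(a2 = 0 \<and> b3 = 0)"
    proof
      assume h: "a2 = 0 \<and> b3 = 0"
      hence "b2 \<noteq> 0" "a3 \<noteq> 0" using np23 by auto
      from R12 h have "a1^2*b2^2 = 0" by simp
      hence "a1 = 0" using \<open>b2 \<noteq> 0\<close> by simp
      thus False using np12 h by simp
    qed
  qed
  have R23: "a2^2*b3^2 = a3^2*b2^2" using H E23 by blast
  have s12: "a1*b2 = -(a2*b1)" by (rule Rsign[OF R12 np12])
  have s13: "a1*b3 = -(a3*b1)" by (rule Rsign[OF R13 np13])
  have s23: "a2*b3 = -(a3*b2)" by (rule Rsign[OF R23 np23])
  have "(a1*b2)*(a2*b3)*(a3*b1) = -((a2*b1)*(a3*b2)*(a1*b3))"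
    using s12 s13 s23 by simp
  hence "a1*a2*a3*b1*b2*b3 = 0" by algebra
  thus False using s12 s13 s23 np12 np13 np23 by auto
qed

lemma sum4: "(\<Sum>j<4. f j) = f 0 + f 1 + f 2 + (f (3::nat)::real)"
  by (simp add: eval_nat_numeral)

lemma P1:
  assumes h: "honest_rep (q l) 4 lam al be" and l1: "l > -1" and l0: "l \<le> 0"
  shows False
proof -
  have rep: "\<forall>x y. q l x y = (\<Sum>j<4. lam j * (al j * x + be j * y) ^ 6)"
    using h unfolding honest_rep_def by blast
  have np: "\<And>i j. i < 4 \<Longrightarrow> j < 4 \<Longrightarrow> i \<noteq> j \<Longrightarrow> al i * be j - al j * be i \<noteq> 0"
    using h unfolding honest_rep_def by blast
  define a0 where "a0 = al 0"
  define a1 where "a1 = al 1"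
  define a2 where "a2 = al 2"
  define a3 where "a3 = al 3"
  define b0 where "b0 = be 0"
  define b1 where "b1 = be 1"
  define b2 where "b2 = be 2"
  define b3 where "b3 = be 3"
  define A1 where "A1 = b0*b1"
  define B1 where "B1 = -(b0*a1 + a0*b1)"
  define D1 where "D1 = a0*a1"
  define A2 where "A2 = b2*b3"
  define B2 where "B2 = -(b2*a3 + a2*b3)"
  define D2 where "D2 = a2*a3"
  define g0 where "g0 = A1*A2"
  define g1 where "g1 = A1*B2 + B1*A2"
  define g2 where "g2 = A1*D2 + B1*B2 + D1*A2"
  define g3 where "g3 = B1*D2 + D1*B2"
  define g4 where "g4 = D1*D2"
  have gpoly: "\<And>a b. g0*a^4 + g1*a^3*b + g2*a^2*b^2 + g3*a*b^3 + g4*b^4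
      = (b0*a - a0*b)*(b1*a - a1*b)*(b2*a - a2*b)*(b3*a - a3*b)"
    unfolding g0_def g1_def g2_def g3_def g4_def A1_def B1_def D1_def A2_def B2_def D2_def
    by algebra
  have gz: "\<And>j. j < 4 \<Longrightarrow> g0*al j^4 + g1*al j^3*be j + g2*al j^2*be j^2 + g3*al j*be j^3 + g4*be j^4 = 0"
  proof -
    fix j :: nat assume "j < 4"
    hence "j = 0 \<or> j = 1 \<or> j = 2 \<or> j = 3" by arith
    thus "g0*al j^4 + g1*al j^3*be j + g2*al j^2*be j^2 + g3*al j*be j^3 + g4*be j^4 = 0"
      unfolding gpoly by (elim disjE) (simp_all add: a0_def a1_def a2_def a3_def b0_def b1_def b2_def b3_def mult.commute)
  qed
  have apo: "\<And>m0 m1 m2. m0*(g1+l*g3) + m1*(g0+l*g2+g4) + m2*(l*g1+g3) = 0"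
  proof -
    fix m0 m1 m2
    show "m0*(g1+l*g3) + m1*(g0+l*g2+g4) + m2*(l*g1+g3) = 0"
      unfolding Apo[OF rep] using gz by simp
  qed
  have e1: "g1 + l*g3 = 0" using apo[of 1 0 0] by simp
  have e2: "g0 + l*g2 + g4 = 0" using apo[of 0 1 0] by simp
  have e3: "l*g1 + g3 = 0" using apo[of 0 0 1] by simp
  have "g1*(1 - l^2) = 0" using e1 e3 by algebra
  moreover have "1 - l^2 \<noteq> 0"
  proof -
    have "(l-1)*(l+1) < 0" using l1 l0 by (intro mult_neg_pos) auto
    moreover have "1 - l^2 = -((l-1)*(l+1))" by algebra
    ultimately have "1 - l^2 > 0" by linarith
    thus ?thesis by simp
  qed
  ultimately have g1: "g1 = 0" by simp
  hence g3: "g3 = 0" using e3 by simp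
  have G: "\<And>j. j < 4 \<Longrightarrow> g0*al j^4 + g2*al j^2*be j^2 + g4*be j^4 = 0"
    using gz g1 g3 by simp
  have nz: "\<And>j. j < 4 \<Longrightarrow> al j \<noteq> 0 \<or> be j \<noteq> 0"
  proof -
    fix j :: nat assume j: "j < 4"
    obtain i where "i < 4" "i \<noteq> j"
    proof (cases "j = 0")
      case True thus ?thesis using that[of 1] by simp
    next
      case False thus ?thesis using that[of 0] by simp
    qed
    hence "al i * be j - al j * be i \<noteq> 0" using np j by blast
    thus "al j \<noteq> 0 \<or> be j \<noteq> 0" by auto
  qed
  have gzero: "g0 = 0 \<and> g2 = 0 \<and> g4 = 0"
  proof -
    have tp: "\<And>i j. i < 4 \<Longrightarrow> j < 4 \<Longrightarrow> al i^2*be j^2 \<noteq> al j^2*be i^2 \<Longrightarrow> \<not>(be i = 0 \<and> al j = 0)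
       \<Longrightarrow> \<not>(al i = 0 \<and> be j = 0) \<Longrightarrow> g0 = 0 \<and> g2 = 0 \<and> g4 = 0"
      by (rule TP[OF l0 e2 G G nz nz]) auto
    have "0 < (4::nat)" "1 < (4::nat)" "2 < (4::nat)" by auto
    from three[OF np[of 0 1] np[of 0 2] np[of 1 2]]
    show ?thesis using tp[of 0 1] tp[of 0 2] tp[of 1 2] by auto
  qed
  obtain t :: real where t: "t \<notin> (\<lambda>j. be j / al j) ` {..<4}"
    using ex_new_if_finite[OF infinite_UNIV_char_0] by blast
  have fac: "\<And>j. j < 4 \<Longrightarrow> be j * 1 - al j * t \<noteq> 0"
  proof
    fix j :: nat assume j: "j < 4" and z: "be j * 1 - al j * t = 0"
    show False
    proof (cases "al j = 0")
      case True thus False using z nz[OF j] by simp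
    next
      case False
      hence "t = be j / al j" using z by (simp add: field_simps)
      thus False using t j by auto
    qed
  qed
  have "(b0*1 - a0*t)*(b1*1 - a1*t)*(b2*1 - a2*t)*(b3*1 - a3*t) \<noteq> 0"
    using fac[of 0] fac[of 1] fac[of 2] fac[of 3]
    unfolding a0_def a1_def a2_def a3_def b0_def b1_def b2_def b3_def by simp
  moreover have "(b0*1 - a0*t)*(b1*1 - a1*t)*(b2*1 - a2*t)*(b3*1 - a3*t) = 0"
    using gpoly[of 1 t] gzero g1 g3 by simp
  ultimately show False by simp
qed

lemma sum_pairs: "(\<Sum>j<2*(n::nat). f j) = (\<Sum>i<n. f (2*i) + f (2*i+1) :: real)"
  by (induction n) (simp_all add: algebra_simps)

lemma card_evens: "card {j. j < 2*n \<and> even j} = n"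
proof -
  have "{j. j < 2*n \<and> even j} = (\<lambda>i. 2*i) ` {..<n}" by (auto elim!: evenE)
  moreover have "inj_on (\<lambda>i::nat. 2*i) {..<n}" by (auto simp: inj_on_def)
  ultimately show ?thesis by (simp add: card_image)
qed

lemma card_odds: "card {j. j < 2*n \<and> odd j} = n"
proof -
  have "{j. j < 2*n \<and> odd j} = (\<lambda>i. 2*i+1) ` {..<n}" by (auto elim!: oddE)
  moreover have "inj_on (\<lambda>i::nat. 2*i+1) {..<n}" by (auto simp: inj_on_def)
  ultimately show ?thesis by (simp add: card_image)
qed

lemma pair_id0: "((s*x+y)^6 - (-s*x+y)^6) = 2*s*(6*x*y^5 + 20*s^2*x^3*y^3 + 6*s^4*x^5*(y::real))"
  by algebra

lemma pair_id: "s \<noteq> 0 \<Longrightarrow> w/(2*s) * ((s*x+y)^6 - (-s*x+y)^6) = w*(6*x*y^5 + 20*s^2*x^3*y^3 + 6*s^4*x^5*(y::real))"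
  unfolding pair_id0 by simp

lemma t1: fixes sg s :: real assumes "\<bar>sg\<bar> = 1" shows "(sg * s)^2 = s^2" "(sg * s)^4 = s^4"
proof -
  have "sg^2 = 1" using assms by (metis abs_mult_self_eq power2_eq_square mult_1_left)
  thus "(sg * s)^2 = s^2" by (simp add: power_mult_distrib)
  from \<open>sg^2 = 1\<close> have "sg^4 = 1" by (metis power_mult power_one numeral_Bit0 mult_2) 
  thus "(sg * s)^4 = s^4" by (simp add: power_mult_distrib)
qed
lemma t2: fixes w s :: "nat \<Rightarrow> real" shows "(\<Sum>i<n. w i*(6*x*y^5 + 20*s i^2*x^3*y^3 + 6*s i^4*x^5*y)) = 6*x*y^5*(\<Sum>i<n. w i) + 20*x^3*y^3*(\<Sum>i<n. w i * s i^2) + 6*x^5*y*(\<Sum>i<n. w i * s i^4)"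
proof -
  have "(\<Sum>i<n. w i*(6*x*y^5 + 20*s i^2*x^3*y^3 + 6*s i^4*x^5*y)) = (\<Sum>i<n. 6*x*y^5*w i + 20*x^3*y^3*(w i * s i^2) + 6*x^5*y*(w i * s i^4))"
    by (rule sum.cong) (simp_all add: algebra_simps)
  also have "\<dots> = 6*x*y^5*(\<Sum>i<n. w i) + 20*x^3*y^3*(\<Sum>i<n. w i * s i^2) + 6*x^5*y*(\<Sum>i<n. w i * s i^4)"
    by (simp add: sum.distrib sum_distrib_left)
  finally show ?thesis .
qed

lemma pairs_rep:
  fixes n :: nat and s w :: "nat \<Rightarrow> real"
  assumes spos: "\<And>i. i < n \<Longrightarrow> s i > 0" and wnz: "\<And>i. i < n \<Longrightarrow> w i \<noteq> 0"
    and inj: "inj_on s {..<n}"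
    and m0: "(\<Sum>i<n. w i) = 1" and m1: "(\<Sum>i<n. w i * s i^2) = l" and m2: "(\<Sum>i<n. w i * s i^4) = 1"
  shows "(n,n) \<in> badges (q l)"
proof -
  define sg where "sg = (\<lambda>i. if w i > 0 then (1::real) else -1)"
  define lam where "lam = (\<lambda>j. if even j then \<bar>w (j div 2)\<bar>/(2*s (j div 2)) else -(\<bar>w (j div 2)\<bar>/(2*s (j div 2))))"
  define al where "al = (\<lambda>j. if even j then sg (j div 2) * s (j div 2) else - (sg (j div 2) * s (j div 2)))"
  define be where "be = (\<lambda>j::nat. (1::real))"
  have sgw: "\<And>i. sg i * \<bar>w i\<bar> = w i" unfolding sg_def by auto
  have sgsq: "\<And>i. \<bar>sg i\<bar> = 1" unfolding sg_def by auto
  have lampos: "\<And>j. j < 2*n \<Longrightarrow> (lam j > 0 \<longleftrightarrow> even j)"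
  proof -
    fix j assume "j < 2*n"
    hence "j div 2 < n" by simp
    hence "\<bar>w (j div 2)\<bar>/(2*s (j div 2)) > 0" using spos wnz by simp
    thus "lam j > 0 \<longleftrightarrow> even j" unfolding lam_def by auto
  qed
  have lamneg: "\<And>j. j < 2*n \<Longrightarrow> (lam j < 0 \<longleftrightarrow> odd j)"
  proof -
    fix j assume "j < 2*n"
    hence "j div 2 < n" by simp
    hence "\<bar>w (j div 2)\<bar>/(2*s (j div 2)) > 0" using spos wnz by simp
    thus "lam j < 0 \<longleftrightarrow> odd j" unfolding lam_def by auto
  qed
  have hon: "honest_rep (q l) (2*n) lam al be"
    unfolding honest_rep_def
  proof (intro conjI allI impI)
    fix j assume "j < 2*n" thus "lam j \<noteq> 0" using lampos[of j] lamneg[of j] by auto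
  next
    fix i j assume ij: "i < 2*n" "j < 2*n" "i \<noteq> j"
    show "al i * be j - al j * be i \<noteq> 0"
    proof
      assume "al i * be j - al j * be i = 0"
      hence eq: "al i = al j" unfolding be_def by simp
      have si: "s (i div 2) > 0" "s (j div 2) > 0" using ij spos by auto
      have "\<bar>al i\<bar> = s (i div 2)" "\<bar>al j\<bar> = s (j div 2)"
        unfolding al_def using sgsq si by (auto simp: abs_mult)
      hence "s (i div 2) = s (j div 2)" using eq by simp
      hence d: "i div 2 = j div 2" using inj ij by (auto simp: inj_on_def)
      have "even i = even j"
      proof (rule ccontr)
        assume "even i \<noteq> even j"
        hence "al i = - al j" unfolding al_def using d by auto
        hence "al i = 0" using eq by simp
        thus False using \<open>\<bar>al i\<bar> = s (i div 2)\<close> si by simp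
      qed
      hence "i = j" using d by presburger
      thus False using ij by simp
    qed
  next
    fix x y
    have "(\<Sum>j<2*n. lam j * (al j * x + be j * y) ^ 6)
       = (\<Sum>i<n. lam (2*i) * (al (2*i) * x + be (2*i) * y) ^ 6 + lam (2*i+1) * (al (2*i+1) * x + be (2*i+1) * y) ^ 6)"
      by (rule sum_pairs)
    also have "\<dots> = (\<Sum>i<n. w i*(6*x*y^5 + 20*s i^2*x^3*y^3 + 6*s i^4*x^5*y))"
    proof (rule sum.cong)
      fix i assume "i \<in> {..<n}"
      hence sn: "s i \<noteq> 0" using spos by force
      have "lam (2*i) * (al (2*i) * x + be (2*i) * y) ^ 6 + lam (2*i+1) * (al (2*i+1) * x + be (2*i+1) * y) ^ 6
        = \<bar>w i\<bar>/(2*s i) * ((sg i * s i*x+y)^6 - (-(sg i * s i)*x+y)^6)"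
        unfolding lam_def al_def be_def by (simp add: algebra_simps)
      also have "\<dots> = (sg i * \<bar>w i\<bar>)/(2*(sg i * s i)) * (((sg i * s i)*x+y)^6 - (-(sg i * s i)*x+y)^6)"
      proof -
        have "(sg i * \<bar>w i\<bar>)/(2*(sg i * s i)) = \<bar>w i\<bar>/(2*s i)" using sgsq[of i] by auto
        thus ?thesis by simp
      qed
      also have "\<dots> = (sg i * \<bar>w i\<bar>)*(6*x*y^5 + 20*(sg i * s i)^2*x^3*y^3 + 6*(sg i * s i)^4*x^5*y)"
        by (rule pair_id) (use sn sgsq[of i] in auto)
      also have "\<dots> = w i*(6*x*y^5 + 20*s i^2*x^3*y^3 + 6*s i^4*x^5*y)"
        using t1[OF sgsq[of i], of "s i"] sgw[of i] by simp
      finally show "lam (2*i) * (al (2*i) * x + be (2*i) * y) ^ 6 + lam (2*i+1) * (al (2*i+1) * x + be (2*i+1) * y) ^ 6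
        = w i*(6*x*y^5 + 20*s i^2*x^3*y^3 + 6*s i^4*x^5*y)" .
    qed simp
    also have "\<dots> = 6*x*y^5*(\<Sum>i<n. w i) + 20*x^3*y^3*(\<Sum>i<n. w i * s i^2) + 6*x^5*y*(\<Sum>i<n. w i * s i^4)"
      by (rule t2)
    also have "\<dots> = q l x y" unfolding m0 m1 m2 q_def by (simp add: algebra_simps)
    finally show "q l x y = (\<Sum>j<2*n. lam j * (al j * x + be j * y) ^ 6)" by simp
  qed
  have "badge (2*n) lam = (n,n)"
  proof -
    have "{j. j < 2*n \<and> lam j > 0} = {j. j < 2*n \<and> even j}" using lampos by auto
    moreover have "{j. j < 2*n \<and> lam j < 0} = {j. j < 2*n \<and> odd j}" using lamneg by auto
    ultimately show ?thesis unfolding badge_def using card_evens card_odds by simp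
  qed
  thus ?thesis using in_badges[OF hon] by simp
qed

lemma sqrt4: "z \<ge> 0 \<Longrightarrow> sqrt z ^ 4 = z^2"
proof -
  assume "z \<ge> 0"
  hence "sqrt z ^ 2 = z" by simp
  hence "(sqrt z ^ 2)^2 = z^2" by simp
  thus ?thesis by (simp add: power_mult[symmetric])
qed

lemma ex11: "(1,1) \<in> badges (q 1)"
  by (rule pairs_rep[of 1 "\<lambda>_. 1" "\<lambda>_. 1"]) (auto simp: inj_on_def)

lemma two_pairs:
  fixes z0 z1 l :: real
  assumes "z0 > 0" "z1 > 0" "z0 \<noteq> z1" "z0 \<noteq> l" "z1 \<noteq> l" "z0*z1 - l*(z0+z1) + 1 = 0"
  shows "(2,2) \<in> badges (q l)"
proof -
  define z where "z = (\<lambda>i::nat. if i = 0 then z0 else z1)"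
  define w where "w = (\<lambda>i::nat. if i = 0 then (l - z1)/(z0 - z1) else (z0 - l)/(z0 - z1))"
  have d: "z0 - z1 \<noteq> 0" using assms by simp
  show ?thesis
  proof (rule pairs_rep[of 2 "\<lambda>i. sqrt (z i)" w])
    show "\<And>i. i < 2 \<Longrightarrow> sqrt (z i) > 0" unfolding z_def using assms by auto
    show "\<And>i. i < 2 \<Longrightarrow> w i \<noteq> 0" unfolding w_def using assms d by auto
    have "sqrt z0 \<noteq> sqrt z1" using assms by simp
    thus "inj_on (\<lambda>i. sqrt (z i)) {..<2}"
      unfolding inj_on_def z_def by (auto simp: less_2_cases_iff)
    have "(l - z1)/(z0 - z1) + (z0 - l)/(z0 - z1) = (z0 - z1)/(z0 - z1)" by (simp add: add_divide_distrib[symmetric])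
    thus "(\<Sum>i<2. w i) = 1" unfolding w_def using d by (simp add: eval_nat_numeral)
    have "(l - z1)/(z0 - z1) * z0 + (z0 - l)/(z0 - z1) * z1 = ((l - z1) * z0 + (z0 - l) * z1)/(z0 - z1)"
      by (simp add: add_divide_distrib)
    also have "(l - z1) * z0 + (z0 - l) * z1 = l * (z0 - z1)" by algebra
    finally have "(l - z1)/(z0 - z1) * z0 + (z0 - l)/(z0 - z1) * z1 = l" using d by simp
    thus "(\<Sum>i<2. w i * sqrt (z i)^2) = l" unfolding w_def z_def using assms
      by (simp add: eval_nat_numeral)
    have s4: "sqrt z0 ^ 4 = z0^2" "sqrt z1 ^ 4 = z1^2" using assms by (simp_all add: sqrt4)
    have "(\<Sum>i<2. w i * sqrt (z i)^4) = (l - z1)/(z0 - z1) * z0^2 + (z0 - l)/(z0 - z1) * z1^2"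
      unfolding w_def z_def using assms by (simp add: numeral_2_eq_2 lessThan_Suc s4)
    also have "\<dots> = 1"
    proof -
      have "(l - z1) * z0^2 + (z0 - l) * z1^2 = (z0 - z1)*1"
      proof -
        have "(l - z1) * z0^2 + (z0 - l) * z1^2 = (z0-z1)*(l*(z0+z1) - z0*z1)" by algebra
        also have "l*(z0+z1) - z0*z1 = 1" using assms(6) by linarith
        finally show ?thesis by simp
      qed
      moreover have "(l - z1)/(z0 - z1) * z0^2 + (z0 - l)/(z0 - z1) * z1^2 = ((l - z1) * z0^2 + (z0 - l) * z1^2)/(z0 - z1)"
        by (simp add: add_divide_distrib)
      ultimately show ?thesis using d by simp
    qed
    finally show "(\<Sum>i<2. w i * sqrt (z i)^4) = 1" .
  qed
qed

lemma ex22: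
  assumes "l > 0" "l \<noteq> 1" shows "(2,2) \<in> badges (q l)"
proof (cases "l < 1")
  case True
  show ?thesis
  proof (rule two_pairs[of "l + 1/l" "l^3"])
    have "1/l > 0" using assms by simp
    thus "l + 1/l > 0" using assms by linarith
    show "l^3 > 0" using assms by simp
    have "l^3 < l" using power_strict_decreasing[of 1 3 l] True assms(1) by simp
    moreover have "l < l + 1/l" using assms by simp
    ultimately show "l + 1/l \<noteq> l^3" "l^3 \<noteq> l" by linarith+
    show "l + 1/l \<noteq> l" using assms by simp
    show "(l + 1/l)*l^3 - l*((l + 1/l) + l^3) + 1 = 0" using assms by (simp add: field_simps) algebra
  qed
next
  case False
  hence l1: "l > 1" using assms by simp
  show ?thesis
  proof (rule two_pairs[of "2*l" "2*l - 1/l"])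
    have "1/l < 1" using l1 by simp
    thus "2*l > 0" "2*l - 1/l > 0" using l1 by linarith+
    show "2*l \<noteq> 2*l - 1/l" "2*l \<noteq> l" using l1 by auto
    show "2*l - 1/l \<noteq> l"
    proof
      assume "2*l - 1/l = l" hence "l*l = 1" using l1 by (simp add: field_simps)
      moreover have "l*l > 1*1" using l1 by (intro mult_strict_mono) auto
      ultimately show False by simp
    qed
    show "2*l*(2*l - 1/l) - l*(2*l + (2*l - 1/l)) + 1 = 0" using l1 by (simp add: field_simps)
  qed
qed

lemma ex33:
  assumes "l < 1" shows "(3,3) \<in> badges (q l)"
proof -
  define z where "z = (\<lambda>i::nat. real i + 1)"
  define w where "w = (\<lambda>i::nat. if i = 0 then 1 + 5/2*(1-l) else if i = 1 then -4*(1-l) else 3/2*(1-l))"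
  show ?thesis
  proof (rule pairs_rep[of 3 "\<lambda>i. sqrt (z i)" w])
    show "\<And>i. i < 3 \<Longrightarrow> sqrt (z i) > 0" unfolding z_def by auto
    show "\<And>i. i < 3 \<Longrightarrow> w i \<noteq> 0" unfolding w_def using assms by (auto simp: field_simps)
    show "inj_on (\<lambda>i. sqrt (z i)) {..<3}"
      unfolding inj_on_def z_def by auto
    show "(\<Sum>i<3. w i) = 1" unfolding w_def by (simp add: eval_nat_numeral field_simps)
    show "(\<Sum>i<3. w i * sqrt (z i)^2) = l" unfolding w_def z_def
      by (simp add: eval_nat_numeral field_simps)
    show "(\<Sum>i<3. w i * sqrt (z i)^4) = 1" unfolding w_def z_def
      by (simp add: eval_nat_numeral sqrt4 field_simps)
  qed
qed

definition Gp :: "real \<Rightarrow> real \<Rightarrow> real \<Rightarrow> real" where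
  "Gp p x y = (p^3-3*p)*(x^6+y^6) + 6*(p^2-2)*(x^5*y+x*y^5) + 15*p*(x^4*y^2+x^2*y^4) + 40*x^3*y^3"

lemma G_pair:
  assumes "t \<noteq> 0"
  shows "(x+t*y)^6 + (t*x+y)^6 = t^3 * Gp (t + 1/t) x y"
proof -
  define u where "u = 1/t"
  have tu: "t*u = 1" unfolding u_def using assms by simp
  have "(x+t*y)^6 + (t*x+y)^6 = t^3 * Gp (t + u) x y"
    unfolding Gp_def using tu by algebra
  thus ?thesis unfolding u_def .
qed

lemma troot:
  fixes p :: real
  assumes "p > 2 \<or> p < -2"
  defines "t \<equiv> (p + sqrt (p^2 - 4))/2"
  shows "t \<noteq> 0" "t + 1/t = p" "p > 2 \<Longrightarrow> t > 0" "p < -2 \<Longrightarrow> t < 0" "t \<noteq> 1" "t \<noteq> -1"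
proof -
  define s where "s = sqrt (p^2 - 4)"
  have p2: "p^2 - 4 > 0"
  proof -
    have "(p-2)*(p+2) > 0" using assms by (auto intro: mult_pos_pos mult_neg_neg)
    moreover have "p^2 - 4 = (p-2)*(p+2)" by algebra
    ultimately show ?thesis by simp
  qed
  have "p^2 - 4 \<ge> 0" using p2 by linarith
  hence s2: "s^2 = p^2 - 4" unfolding s_def by (rule real_sqrt_pow2)
  have s0: "s \<ge> 0" unfolding s_def using p2 by simp
  have "t*t - p*t + 1 = (s^2 - (p^2 - 4))/4" unfolding t_def s_def[symmetric]
    by (simp add: field_simps power2_eq_square)
  hence tt: "t*t - p*t + 1 = 0" using s2 by simp
  show t0: "t \<noteq> 0" using tt by auto
  show "t + 1/t = p" using tt t0 by (simp add: field_simps)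
  show "p > 2 \<Longrightarrow> t > 0" unfolding t_def s_def[symmetric] using s0 by simp
  show "p < -2 \<Longrightarrow> t < 0"
  proof -
    assume "p < -2"
    have "s^2 < (-p)^2" using s2 by simp
    hence "s < -p" using \<open>p < -2\<close> by (intro power_less_imp_less_base[of s 2 "-p"]) auto
    thus "t < 0" unfolding t_def s_def[symmetric] by simp
  qed
  show "t \<noteq> 1"
  proof
    assume "t = 1" hence "p = 2" using tt by simp
    thus False using assms by simp
  qed
  show "t \<noteq> -1"
  proof
    assume "t = -1" hence "p = -2" using tt by simp
    thus False using assms by simp
  qed
qed

lemma Eeqs:
  fixes l p r :: real
  assumes nz: "p - 2 \<noteq> 0" "r - 2 \<noteq> 0" "p - r \<noteq> 0" "p \<noteq> 0" "r \<noteq> 0"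
    and con: "(1+l)*(p+r+2) + l*p*r = 0"
  defines "c0 \<equiv> -(1+l)*(p+r)/((p-2)*(r-2))"
    and "d1 \<equiv> -(1+l)*(r+2)/((p-r)*(p-2)*p)"
    and "d2 \<equiv> (1+l)*(p+2)/((p-r)*(r-2)*r)"
  shows "c0 + d1*(p^3-3*p) + d2*(r^3-3*r) = 0" "c0 + d1*(p^2-2) + d2*(r^2-2) = 1"
    "c0 + d1*p + d2*r = 0" "c0 + 2*d1 + 2*d2 = l"
proof -
  have z: "(p-2)*(r-2)*(p-r)*p*r \<noteq> 0" using nz by simp
  have h0: "c0*((p-2)*(r-2)) = -(1+l)*(p+r)" unfolding c0_def using nz by simp
  have h1: "d1*((p-r)*(p-2)*p) = -(1+l)*(r+2)" unfolding d1_def using nz by simp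
  have h2: "d2*((p-r)*(r-2)*r) = (1+l)*(p+2)" unfolding d2_def using nz by simp
  have "((p-2)*(r-2)*(p-r)*p*r) * (c0 + d1*p + d2*r) = 0" using h0 h1 h2 by algebra
  thus "c0 + d1*p + d2*r = 0" using z by simp
  have "((p-2)*(r-2)*(p-r)*p*r) * (c0 + 2*d1 + 2*d2 - l) = 0" using h0 h1 h2 con by algebra
  thus "c0 + 2*d1 + 2*d2 = l" using z by simp
  have "((p-2)*(r-2)*(p-r)*p*r) * (c0 + d1*(p^2-2) + d2*(r^2-2) - 1) = 0" using h0 h1 h2 con by algebra
  thus "c0 + d1*(p^2-2) + d2*(r^2-2) = 1" using z by simp
  have "((p-2)*(r-2)*(p-r)*p*r) * (c0 + d1*(p^3-3*p) + d2*(r^3-3*r)) = 0" using h0 h1 h2 con by algebra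
  thus "c0 + d1*(p^3-3*p) + d2*(r^3-3*r) = 0" using z by simp
qed

lemma five: "j < (5::nat) \<longleftrightarrow> j = 0 \<or> j = 1 \<or> j = 2 \<or> j = 3 \<or> j = 4" by arith

lemma sum5: "(\<Sum>j<5. f j) = f 0 + f 1 + f 2 + f 3 + (f (4::nat)::real)"
  by (simp add: eval_nat_numeral)

lemma badge5:
  fixes c0 c1 c2 :: real
  assumes "c0 \<noteq> 0" "c1*c2 < 0"
  shows "badge 5 (\<lambda>j. [c0,c1,c1,c2,c2] ! j) = (3,2) \<or> badge 5 (\<lambda>j. [c0,c1,c1,c2,c2] ! j) = (2,3)"
proof -
  have c12: "(c1 > 0 \<and> c2 < 0) \<or> (c1 < 0 \<and> c2 > 0)" using assms(2)
    by (metis mult_pos_pos mult_neg_neg linorder_neqE_linordered_idom mult_eq_0_iff not_less_iff_gr_or_eq less_irrefl)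
  show ?thesis
  proof (cases "c0 > 0")
    case True
    hence c0: "c0 > 0" .
    from c12 show ?thesis
    proof
      assume h: "c1 > 0 \<and> c2 < 0"
      have "{j. j < 5 \<and> [c0,c1,c1,c2,c2] ! j > 0} = {0,1,2}" using h c0 by (auto simp: five)
      moreover have "{j. j < 5 \<and> [c0,c1,c1,c2,c2] ! j < 0} = {3,4}" using h c0 by (auto simp: five)
      ultimately show ?thesis unfolding badge_def by simp
    next
      assume h: "c1 < 0 \<and> c2 > 0"
      have "{j. j < 5 \<and> [c0,c1,c1,c2,c2] ! j > 0} = {0,3,4}" using h c0 by (auto simp: five)
      moreover have "{j. j < 5 \<and> [c0,c1,c1,c2,c2] ! j < 0} = {1,2}" using h c0 by (auto simp: five)
      ultimately show ?thesis unfolding badge_def by simp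
    qed
  next
    case False
    hence c0: "c0 < 0" using assms(1) by simp
    from c12 show ?thesis
    proof
      assume h: "c1 > 0 \<and> c2 < 0"
      have "{j. j < 5 \<and> [c0,c1,c1,c2,c2] ! j > 0} = {1,2}" using h c0 by (auto simp: five)
      moreover have "{j. j < 5 \<and> [c0,c1,c1,c2,c2] ! j < 0} = {0,3,4}" using h c0 by (auto simp: five)
      ultimately show ?thesis unfolding badge_def by simp
    next
      assume h: "c1 < 0 \<and> c2 > 0"
      have "{j. j < 5 \<and> [c0,c1,c1,c2,c2] ! j > 0} = {3,4}" using h c0 by (auto simp: five)
      moreover have "{j. j < 5 \<and> [c0,c1,c1,c2,c2] ! j < 0} = {0,1,2}" using h c0 by (auto simp: five)
      ultimately show ?thesis unfolding badge_def by simp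
    qed
  qed
qed

lemma rep5:
  fixes l p r :: real
  assumes p: "p > 2" and r: "r > 2 \<or> r < -2" and pr: "p \<noteq> r" and ppr: "p + r \<noteq> 0" and l: "l > -1"
    and con: "(1+l)*(p+r+2) + l*p*r = 0"
  shows "(3,2) \<in> badges (q l) \<or> (2,3) \<in> badges (q l)"
proof -
  have p2: "p > 2 \<or> p < -2" using p by simp
  define t1 where "t1 = (p + sqrt (p^2 - 4))/2"
  define t2 where "t2 = (r + sqrt (r^2 - 4))/2"
  note T1 = troot[OF p2, folded t1_def]
  note T2 = troot[OF r, folded t2_def]
  have t1p: "t1 > 0" using T1(3) p by simp
  have t12: "t1 \<noteq> t2"
  proof
    assume "t1 = t2" hence "p = r" using T1(2) T2(2) by simp
    thus False using pr by simp
  qed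
  have t12': "t1 * t2 \<noteq> 1" "t2 * t1 \<noteq> 1"
  proof -
    show "t1 * t2 \<noteq> 1"
    proof
      assume h: "t1 * t2 = 1"
      hence "t2 = 1/t1" "1/t2 = t1" using T1(1) T2(1) by (simp_all add: field_simps)
      hence "r = p" using T1(2) T2(2) by simp
      thus False using pr by simp
    qed
    thus "t2 * t1 \<noteq> 1" by (simp add: mult.commute)
  qed
  have nz: "p - 2 \<noteq> 0" "r - 2 \<noteq> 0" "p - r \<noteq> 0" "p \<noteq> 0" "r \<noteq> 0" using p r pr by auto
  define c0 where "c0 = -(1+l)*(p+r)/((p-2)*(r-2))"
  define d1 where "d1 = -(1+l)*(r+2)/((p-r)*(p-2)*p)"
  define d2 where "d2 = (1+l)*(p+2)/((p-r)*(r-2)*r)"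
  note EE = Eeqs[OF nz con, folded c0_def d1_def d2_def]
  define c1 where "c1 = d1/t1^3"
  define c2 where "c2 = d2/t2^3"
  have c1t: "c1 * t1^3 = d1" unfolding c1_def using T1(1) by simp
  have c2t: "c2 * t2^3 = d2" unfolding c2_def using T2(1) by simp
  have c0nz: "c0 \<noteq> 0" unfolding c0_def using nz ppr l by simp
  have c12: "c1 * c2 < 0"
  proof -
    have lp: "1 + l > 0" using l by simp
    from r show ?thesis
    proof
      assume r2: "r > 2"
      have t2p: "t2 > 0" using T2(3) r2 by simp
      have "d1 * d2 < 0"
      proof -
        have "d1 * d2 = -((1+l)^2*((r+2)*(p+2))) / ((p-r)^2*((p-2)*p)*((r-2)*r))"
          unfolding d1_def d2_def by (simp add: field_simps power2_eq_square)
        moreover have "(1+l)^2*((r+2)*(p+2)) > 0" using lp p r2 by simp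
        moreover have "(p-r)^2*((p-2)*p)*((r-2)*r) > 0" using p r2 nz by simp
        ultimately show ?thesis by (simp add: divide_neg_pos)
      qed
      moreover have "c1 * c2 = (d1*d2) / (t1*t2)^3" unfolding c1_def c2_def by (simp add: power_mult_distrib)
      moreover have "(t1*t2)^3 > 0" using t1p t2p by simp
      ultimately show ?thesis by (simp add: divide_neg_pos)
    next
      assume r2: "r < -2"
      have t2n: "t2 < 0" using T2(4) r2 by simp
      have "d1 > 0"
      proof -
        have "(-(1+l))*(r+2) > 0" by (rule mult_neg_neg) (use lp r2 in auto)
        moreover have "(p-r)*(p-2)*p > 0" using p r2 by simp
        ultimately show ?thesis unfolding d1_def by simp
      qed
      moreover have "d2 > 0"
      proof -
        have "(1+l)*(p+2) > 0" using lp p by simp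
        moreover have "(p-r)*(r-2)*r > 0"
        proof -
          have "(p-r) > 0" "(r-2)*r > 0" using p r2 by (auto intro: mult_neg_neg)
          thus ?thesis by (simp add: mult.assoc)
        qed
        ultimately show ?thesis unfolding d2_def by simp
      qed
      moreover have "t1^3 > 0" "t2^3 < 0" using t1p t2n by (simp_all add: odd_pos power_less_zero_eq)
      ultimately have "c1 > 0" "c2 < 0"
        unfolding c1_def c2_def by (simp_all add: divide_pos_neg)
      thus ?thesis by (simp add: mult_pos_neg)
    qed
  qed
  have c1nz: "c1 \<noteq> 0" and c2nz: "c2 \<noteq> 0" using c12 by auto
  have tsq: "t1 * t1 \<noteq> 1" "t2 * t2 \<noteq> 1"
  proof -
    show "t1 * t1 \<noteq> 1"
    proof
      assume "t1 * t1 = 1" hence "(t1 - 1)*(t1 + 1) = 0" by algebra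
      thus False using T1(5) T1(6) by auto
    qed
    show "t2 * t2 \<noteq> 1"
    proof
      assume "t2 * t2 = 1" hence "(t2 - 1)*(t2 + 1) = 0" by algebra
      thus False using T2(5) T2(6) by auto
    qed
  qed
  define lam where "lam = (\<lambda>j. [c0,c1,c1,c2,c2] ! j)"
  define al where "al = (\<lambda>j. [1,1,t1,1,t2] ! j)"
  define be where "be = (\<lambda>j. [1,t1,1,t2,1] ! j)"
  have hon: "honest_rep (q l) 5 lam al be"
    unfolding honest_rep_def
  proof (intro conjI allI impI)
    fix j :: nat assume "j < 5" thus "lam j \<noteq> 0" unfolding lam_def using c0nz c1nz c2nz by (auto simp: five)
  next
    fix i j :: nat assume "i < 5" "j < 5" "i \<noteq> j"
    thus "al i * be j - al j * be i \<noteq> 0" unfolding al_def be_def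
      using T1(5) T1(6) T2(5) T2(6) t12 t12' tsq by (auto simp: five)
  next
    fix x y
    have "(\<Sum>j<5. lam j * (al j * x + be j * y) ^ 6) =
       c0*(x+y)^6 + c1*((x+t1*y)^6 + (t1*x+y)^6) + c2*((x+t2*y)^6 + (t2*x+y)^6)"
      unfolding sum5 lam_def al_def be_def by (simp add: distrib_left)
    also have "\<dots> = c0*(x+y)^6 + c1*(t1^3 * Gp p x y) + c2*(t2^3 * Gp r x y)"
      using G_pair[OF T1(1), of x y] G_pair[OF T2(1), of x y] T1(2) T2(2) by simp
    also have "\<dots> = c0*(x+y)^6 + d1 * Gp p x y + d2 * Gp r x y"
      using c1t c2t by (simp add: mult.assoc[symmetric])
    also have "\<dots> = q l x y"
      unfolding Gp_def q_def using EE by algebra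
    finally show "q l x y = (\<Sum>j<5. lam j * (al j * x + be j * y) ^ 6)" by simp
  qed
  have "badge 5 lam = (3,2) \<or> badge 5 lam = (2,3)"
    unfolding lam_def by (rule badge5[OF c0nz c12])
  thus ?thesis using in_badges[OF hon] by auto
qed

lemma ex_case3:
  fixes l :: real
  assumes l1: "-3/5 < l" and l0: "l \<le> 0"
  shows "(3,2) \<in> badges (q l) \<and> (2,3) \<in> badges (q l)"
proof -
  have lm1: "l > -1" using l1 by simp
  have "(3,2) \<in> badges (q l) \<or> (2,3) \<in> badges (q l)"
  proof (cases "l \<ge> -1/5")
    case True
    define r where "r = -5*(1+l)/(1+4*l)"
    have den: "1+4*l > 0" using True by simp
    have hr: "r*(1+4*l) = -5*(1+l)" unfolding r_def using den by simp
    have r5: "r \<le> -5"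
    proof (rule ccontr)
      assume "\<not> r \<le> -5"
      hence "r*(1+4*l) > (-5)*(1+4*l)" using den by (intro mult_strict_right_mono) auto
      hence "-5*(1+l) > (-5)*(1+4*l)" unfolding hr .
      thus False using l0 by (simp add: algebra_simps)
    qed
    show ?thesis
    proof (rule rep5[of 3 r l])
      show "(3::real) > 2" "r > 2 \<or> r < -2" "3 \<noteq> r" "3 + r \<noteq> 0" "l > -1" using r5 lm1 by auto
      show "(1+l)*(3+r+2) + l*3*r = 0" using hr by algebra
    qed
  next
    case False
    hence lf: "l < -1/5" by simp
    show ?thesis
    proof (cases "l \<ge> -1/3")
      case True
      define r where "r = -6*(1+l)/(1+5*l)"
      have den: "1+5*l < 0" using lf by simp
      have hr: "r*(1+5*l) = -6*(1+l)" unfolding r_def using den by simp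
      have r6: "r \<ge> 6"
      proof (rule ccontr)
        assume "\<not> r \<ge> 6"
        hence "r*(1+5*l) > 6*(1+5*l)" using den by (intro mult_strict_right_mono_neg) auto
        hence "-6*(1+l) > 6*(1+5*l)" unfolding hr .
        thus False using True by (simp add: algebra_simps)
      qed
      show ?thesis
      proof (rule rep5[of 4 r l])
        show "(4::real) > 2" "r > 2 \<or> r < -2" "4 \<noteq> r" "4 + r \<noteq> 0" "l > -1" using r6 lm1 by auto
        show "(1+l)*(4+r+2) + l*4*r = 0" using hr by algebra
      qed
    next
      case False
      hence lt: "l < -1/3" by simp
      define k where "k = -3*l - 1"
      have k0: "k > 0" "k < 4/5" unfolding k_def using lt l1 by auto
      define D where "D = 4*k^2 - k + 4"
      have D0: "D > 0"
      proof -
        have "D = 4*(k - 1/8)^2 + 63/16" unfolding D_def by algebra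
        moreover have "4*(k - 1/8)^2 \<ge> 0" by simp
        ultimately show ?thesis by linarith
      qed
      define p where "p = (k+4)/(3*k)"
      define r where "r = (2-k)*(7*k+4)/D"
      have hp: "p*(3*k) = k+4" unfolding p_def using k0 by simp
      have hr: "r*D = (2-k)*(7*k+4)" unfolding r_def using D0 by simp
      have hl: "3*l = -(k+1)" unfolding k_def by simp
      have p2: "p > 2"
      proof (rule ccontr)
        assume "\<not> p > 2"
        hence "p*(3*k) \<le> 2*(3*k)" using k0 by (intro mult_right_mono) auto
        hence "k+4 \<le> 2*(3*k)" unfolding hp .
        thus False using k0 by (simp add: algebra_simps)
      qed
      have r2: "r > 2"
      proof (rule ccontr)
        assume "\<not> r > 2"
        hence "r*D \<le> 2*D" using D0 by (intro mult_right_mono) auto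
        hence "(2-k)*(7*k+4) \<le> 2*D" unfolding hr .
        moreover have "(2-k)*(7*k+4) - 2*D = 3*k*(4-5*k)" unfolding D_def by algebra
        moreover have "3*k*(4-5*k) > 0" using k0 by simp
        ultimately show False by linarith
      qed
      have pr: "p \<noteq> r"
      proof
        assume "p = r"
        have "(k+4)*D = (p*(3*k))*D" using hp by simp
        also have "\<dots> = 3*k*(r*D)" using \<open>p = r\<close> by (simp add: algebra_simps)
        also have "\<dots> = 3*k*((2-k)*(7*k+4))" using hr by simp
        finally have "(k+4)*D = 3*k*((2-k)*(7*k+4))" .
        hence "(5*k-4)^2*(k+1) = 0" unfolding D_def by algebra
        thus False using k0 by simp
      qed
      show ?thesis
      proof (rule rep5[of p r l])
        show "p > 2" "r > 2 \<or> r < -2" "p \<noteq> r" "p + r \<noteq> 0" "l > -1" using p2 r2 pr lm1 by auto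
        have "(9*k*D)*((1+l)*(p+r+2) + l*p*r) = 0" using hp hr hl unfolding D_def by algebra
        moreover have "9*k*D \<noteq> 0" using k0 D0 by simp
        ultimately show "(1+l)*(p+r+2) + l*p*r = 0" by simp
      qed
    qed
  qed
  thus ?thesis using badges_swap by blast
qed

lemma badge_fst: "fst (badge r lam) = card {j. j < r \<and> lam j > 0}" unfolding badge_def by simp

lemma LB1:
  assumes "l > -1" "(a,b) \<in> badges (q l)" shows "a \<ge> 1"
proof -
  obtain r lam al be where ab: "(a,b) = badge r lam" and h: "honest_rep (q l) r lam al be"
    using assms(2) unfolding badges_def by blast
  have rep: "\<forall>x y. q l x y = (\<Sum>j<r. lam j * (al j * x + be j * y) ^ 6)" using h unfolding honest_rep_def by blast
  obtain j where "j < r" "lam j > 0" using pos1[OF rep assms(1)] by blast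
  hence "{j. j < r \<and> lam j > 0} \<noteq> {}" by auto
  hence "card {j. j < r \<and> lam j > 0} > 0" by (simp add: card_gt_0_iff)
  moreover have "a = card {j. j < r \<and> lam j > 0}" using ab unfolding badge_def by simp
  ultimately show ?thesis by simp
qed

lemma LB2:
  assumes "(-1 < l \<and> l < 1) \<or> l > 1" "(a,b) \<in> badges (q l)" shows "a \<ge> 2"
proof (rule ccontr)
  assume "\<not> a \<ge> 2"
  obtain r lam al be where ab: "(a,b) = badge r lam" and h: "honest_rep (q l) r lam al be"
    using assms(2) unfolding badges_def by blast
  have rep: "\<forall>x y. q l x y = (\<Sum>j<r. lam j * (al j * x + be j * y) ^ 6)" using h unfolding honest_rep_def by blast
  define S where "S = {j. j < r \<and> lam j > 0}"
  have "card S \<le> 1" using \<open>\<not> a \<ge> 2\<close> ab unfolding S_def badge_def by simp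
  hence one: "\<forall>x\<in>S. \<forall>y\<in>S. x = y" using card_le_Suc0_iff_eq[of S] unfolding S_def by simp
  show False
  proof (cases "S = {}")
    case True
    show False by (rule pos2[OF rep assms(1), of 0 0]) (use True in \<open>auto simp: S_def\<close>)
  next
    case False
    then obtain j0 where "j0 \<in> S" by blast
    show False
      by (rule pos2[OF rep assms(1), of "al j0" "be j0"]) (use one \<open>j0 \<in> S\<close> in \<open>auto simp: S_def\<close>)
  qed
qed

lemma LB3:
  assumes "l \<le> -3/5" "(a,b) \<in> badges (q l)" shows "a \<ge> 3"
proof (rule ccontr)
  assume "\<not> a \<ge> 3"
  obtain r lam al be where ab: "(a,b) = badge r lam" and h: "honest_rep (q l) r lam al be"
    using assms(2) unfolding badges_def by blast
  have rep: "\<forall>x y. q l x y = (\<Sum>j<r. lam j * (al j * x + be j * y) ^ 6)" using h unfolding honest_rep_def by blast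
  have np: "\<And>i j. i < r \<Longrightarrow> j < r \<Longrightarrow> i \<noteq> j \<Longrightarrow> al i * be j - al j * be i \<noteq> 0"
    using h unfolding honest_rep_def by blast
  define S where "S = {j. j < r \<and> lam j > 0}"
  have fin: "finite S" unfolding S_def by simp
  have "card S \<le> 2" using \<open>\<not> a \<ge> 3\<close> ab unfolding S_def badge_def by simp
  hence "card S = 0 \<or> card S = 1 \<or> card S = 2" by arith
  hence "\<exists>a1 b1 a2 b2. a1*b2 - a2*b1 \<noteq> 0 \<and> (\<forall>j<r. lam j > 0 \<longrightarrow> (b1*al j - a1*be j)*(b2*al j - a2*be j) = 0)"
  proof (elim disjE)
    assume "card S = 0"
    hence "S = {}" using fin by simp
    hence "\<forall>j<r. \<not> lam j > 0" unfolding S_def by auto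
    hence "\<forall>j<r. lam j > 0 \<longrightarrow> (0*al j - 1*be j)*(1*al j - 0*be j) = 0" by blast
    moreover have "(1::real)*1 - 0*0 \<noteq> 0" by simp
    ultimately show ?thesis by blast
  next
    assume "card S = 1"
    then obtain i where Si: "S = {i}" by (auto simp: card_1_singleton_iff)
    have jS: "\<And>j. j < r \<Longrightarrow> lam j > 0 \<Longrightarrow> j = i"
    proof -
      fix j assume "j < r" "lam j > 0"
      hence "j \<in> S" unfolding S_def by simp
      thus "j = i" using Si by simp
    qed
    show ?thesis
    proof (cases "al i = 0 \<and> be i = 0")
      case True
      have "\<forall>j<r. lam j > 0 \<longrightarrow> (0*al j - 1*be j)*(1*al j - 0*be j) = 0"
      proof (intro allI impI)
        fix j assume "j < r" "lam j > 0"
        hence "j = i" by (rule jS)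
        thus "(0*al j - 1*be j)*(1*al j - 0*be j) = 0" using True by simp
      qed
      moreover have "(1::real)*1 - 0*0 \<noteq> 0" by simp
      ultimately show ?thesis by blast
    next
      case False
      hence "al i * al i + be i * be i \<noteq> 0"
        by (simp add: sum_squares_eq_zero_iff)
      hence "al i * al i - (-be i) * be i \<noteq> 0" by simp
      moreover have "\<forall>j<r. lam j > 0 \<longrightarrow> (be i*al j - al i*be j)*(al i*al j - (-be i)*be j) = 0"
      proof (intro allI impI)
        fix j assume "j < r" "lam j > 0"
        hence "j = i" by (rule jS)
        thus "(be i*al j - al i*be j)*(al i*al j - (-be i)*be j) = 0" by (simp add: mult.commute)
      qed
      ultimately show ?thesis by blast
    qed
  next
    assume "card S = 2"
    then obtain i k where Sik: "S = {i,k}" "i \<noteq> k" by (auto simp: card_2_iff)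
    hence "i < r" "k < r" unfolding S_def by auto
    hence "al i * be k - al k * be i \<noteq> 0" using np Sik(2) by blast
    moreover have "\<forall>j<r. lam j > 0 \<longrightarrow> (be i*al j - al i*be j)*(be k*al j - al k*be j) = 0"
    proof (intro allI impI)
      fix j assume "j < r" "lam j > 0"
      hence "j \<in> S" unfolding S_def by simp
      hence "j = i \<or> j = k" using Sik by simp
      thus "(be i*al j - al i*be j)*(be k*al j - al k*be j) = 0" by (auto simp: mult.commute)
    qed
    ultimately show ?thesis by blast
  qed
  then obtain a1 b1 a2 b2 where "a1*b2 - a2*b1 \<noteq> 0"
    "\<forall>j<r. lam j > 0 \<longrightarrow> (b1*al j - a1*be j)*(b2*al j - a2*be j) = 0" by blast
  thus False using P2[OF rep assms(1)] by blast
qed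

lemma No22:
  assumes "-1 < l" "l \<le> 0" shows "(2,2) \<notin> badges (q l)"
proof
  assume "(2,2) \<in> badges (q l)"
  then obtain r lam al be where ab: "(2,2) = badge r lam" and h: "honest_rep (q l) r lam al be"
    unfolding badges_def by blast
  have "r = 4" using badge_sum[OF h] ab[symmetric] by simp
  thus False using P1[OF _ assms] h by simp
qed

lemma sig_single:
  assumes "m \<in> badges p" "\<forall>c\<in>badges p. badge_le m c" shows "signatures p = {m}"
proof
  show "signatures p \<subseteq> {m}"
  proof
    fix b assume "b \<in> signatures p"
    hence "b \<in> badges p" "\<forall>c\<in>badges p. badge_le c b \<longrightarrow> c = b" unfolding signatures_def by auto
    hence "badge_le m b \<longrightarrow> m = b" using assms(1) by blast
    thus "b \<in> {m}" using assms(2) \<open>b \<in> badges p\<close> by auto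
  qed
  show "{m} \<subseteq> signatures p"
  proof -
    have "\<forall>c\<in>badges p. badge_le c m \<longrightarrow> c = m"
    proof (intro ballI impI)
      fix c assume "c \<in> badges p" "badge_le c m"
      hence "badge_le m c" using assms(2) by blast
      with \<open>badge_le c m\<close> show "c = m" unfolding badge_le_def by (simp add: prod_eq_iff)
    qed
    thus ?thesis using assms(1) unfolding signatures_def by auto
  qed
qed

theorem theorem4p4:
  fixes l :: real
  shows "(l = 1 \<longrightarrow> signatures (q l) = {(1, 1)}) \<and>
         (l > 0 \<and> l \<noteq> 1 \<longrightarrow> signatures (q l) = {(2, 2)}) \<and>
         (- 3 / 5 < l \<and> l \<le> 0 \<longrightarrow> signatures (q l) = {(2, 3), (3, 2)}) \<and>
         (l \<le> - 3 / 5 \<longrightarrow> signatures (q l) = {(3, 3)})"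
proof (intro conjI impI)
  assume l: "l = 1"
  show "signatures (q l) = {(1, 1)}"
  proof (rule sig_single)
    show "(1,1) \<in> badges (q l)" using ex11 l by simp
    show "\<forall>c\<in>badges (q l). badge_le (1,1) c"
    proof
      fix c assume c: "c \<in> badges (q l)"
      obtain a b where ab: "c = (a,b)" by (cases c)
      have "a \<ge> 1" using LB1[of l a b] c ab l by simp
      moreover have "b \<ge> 1" using LB1[of l b a] badges_swap[of a b l] c ab l by simp
      ultimately show "badge_le (1,1) c" unfolding badge_le_def ab by simp
    qed
  qed
next
  assume l: "l > 0 \<and> l \<noteq> 1"
  hence lc: "(-1 < l \<and> l < 1) \<or> l > 1" by auto
  show "signatures (q l) = {(2, 2)}"
  proof (rule sig_single)
    show "(2,2) \<in> badges (q l)" using ex22 l by simp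
    show "\<forall>c\<in>badges (q l). badge_le (2,2) c"
    proof
      fix c assume c: "c \<in> badges (q l)"
      obtain a b where ab: "c = (a,b)" by (cases c)
      have "a \<ge> 2" using LB2[OF lc, of a b] c ab by simp
      moreover have "b \<ge> 2" using LB2[OF lc, of b a] badges_swap[of a b l] c ab by simp
      ultimately show "badge_le (2,2) c" unfolding badge_le_def ab by simp
    qed
  qed
next
  assume l: "- 3 / 5 < l \<and> l \<le> 0"
  hence lc: "(-1 < l \<and> l < 1) \<or> l > 1" by auto
  have ex: "(3,2) \<in> badges (q l)" "(2,3) \<in> badges (q l)" using ex_case3 l by auto
  have lb: "\<And>a b. (a,b) \<in> badges (q l) \<Longrightarrow> a \<ge> 2 \<and> b \<ge> 2 \<and> (a,b) \<noteq> (2,2)"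
  proof -
    fix a b assume c: "(a,b) \<in> badges (q l)"
    have "a \<ge> 2" using LB2[OF lc c] .
    moreover have "b \<ge> 2" using LB2[OF lc badges_swap[OF c]] .
    moreover have "(a,b) \<noteq> (2,2)" using No22[of l] l c by auto
    ultimately show "a \<ge> 2 \<and> b \<ge> 2 \<and> (a,b) \<noteq> (2,2)" by simp
  qed
  show "signatures (q l) = {(2, 3), (3, 2)}"
  proof
    show "signatures (q l) \<subseteq> {(2, 3), (3, 2)}"
    proof
      fix c assume "c \<in> signatures (q l)"
      hence c: "c \<in> badges (q l)" "\<forall>d\<in>badges (q l). badge_le d c \<longrightarrow> d = c" unfolding signatures_def by auto
      obtain a b where ab: "c = (a,b)" by (cases c)
      have h: "a \<ge> 2" "b \<ge> 2" "(a,b) \<noteq> (2,2)" using lb c(1) ab by auto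
      show "c \<in> {(2, 3), (3, 2)}"
      proof (cases "a = 2")
        case True
        hence "b \<ge> 3" using h by auto
        hence "badge_le (2,3) c" unfolding badge_le_def ab using True by simp
        hence "(2,3) = c" using c(2) ex by blast
        thus ?thesis by simp
      next
        case False
        hence "a \<ge> 3" using h by auto
        hence "badge_le (3,2) c" unfolding badge_le_def ab using h by simp
        hence "(3,2) = c" using c(2) ex by blast
        thus ?thesis by simp
      qed
    qed
    show "{(2, 3), (3, 2)} \<subseteq> signatures (q l)"
    proof -
      have "\<forall>d\<in>badges (q l). badge_le d (2,3) \<longrightarrow> d = (2,3)"
      proof (intro ballI impI)
        fix d assume d: "d \<in> badges (q l)" "badge_le d (2,3)"
        obtain a b where ab: "d = (a,b)" by (cases d)
        have "a \<ge> 2" "b \<ge> 2" "(a,b) \<noteq> (2,2)" using lb d(1) ab by auto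
        moreover have "a \<le> 2" "b \<le> 3" using d(2) ab unfolding badge_le_def by auto
        ultimately show "d = (2,3)" using ab by auto
      qed
      moreover have "\<forall>d\<in>badges (q l). badge_le d (3,2) \<longrightarrow> d = (3,2)"
      proof (intro ballI impI)
        fix d assume d: "d \<in> badges (q l)" "badge_le d (3,2)"
        obtain a b where ab: "d = (a,b)" by (cases d)
        have "a \<ge> 2" "b \<ge> 2" "(a,b) \<noteq> (2,2)" using lb d(1) ab by auto
        moreover have "a \<le> 3" "b \<le> 2" using d(2) ab unfolding badge_le_def by auto
        ultimately show "d = (3,2)" using ab by auto
      qed
      ultimately show ?thesis using ex unfolding signatures_def by auto
    qed
  qed
next
  assume l: "l \<le> - 3 / 5"
  show "signatures (q l) = {(3, 3)}"
  proof (rule sig_single)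
    show "(3,3) \<in> badges (q l)" using ex33 l by simp
    show "\<forall>c\<in>badges (q l). badge_le (3,3) c"
    proof
      fix c assume c: "c \<in> badges (q l)"
      obtain a b where ab: "c = (a,b)" by (cases c)
      have "a \<ge> 3" using LB3[OF l, of a b] c ab by simp
      moreover have "b \<ge> 3" using LB3[OF l, of b a] badges_swap[of a b l] c ab by simp
      ultimately show "badge_le (3,3) c" unfolding badge_le_def ab by simp
    qed
  qed
qed

end
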